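(* Let $G$ be a bipartite graph with parts $X$ and $Y$ such that every vertex in $Y$ has degree at least $(|X|+|Y|)/2$. Then $G$ contains a path covering $2|Y|$ vertices. *)

theory Defs
  imports Main
begin

definition bipartite_graph :: "'a set \<Rightarrow> 'a set \<Rightarrow> ('a \<Rightarrow> 'a \<Rightarrow> bool) \<Rightarrow> bool" where
  "bipartite_graph X Y E \<longleftrightarrow> finite X \<and> finite Y \<and> X \<inter> Y = {} \<and>
     (\<forall>u v. E u v \<longleftrightarrow> E v u) \<and>
     (\<forall>u v. E u v \<longrightarrow> (u \<in> X \<and> v \<in> Y) \<or> (u \<in> Y \<and> v \<in> X))"

definition degree :: "'a set \<Rightarrow> ('a \<Rightarrow> 'a \<Rightarrow> bool) \<Rightarrow> 'a \<Rightarrow> nat" where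
  "degree V E v = card {u \<in> V. E v u}"

definition is_path :: "'a set \<Rightarrow> ('a \<Rightarrow> 'a \<Rightarrow> bool) \<Rightarrow> 'a list \<Rightarrow> bool" where
  "is_path V E p \<longleftrightarrow> set p \<subseteq> V \<and> distinct p \<and>
     (\<forall>i. Suc i < length p \<longrightarrow> E (p ! i) (p ! Suc i))"

end

theory Submission
  imports Defs
begin

lemma is_path_Cons:
  "is_path V E (a # p) \<longleftrightarrow> a \<in> V \<and> a \<notin> set p \<and> (p \<noteq> [] \<longrightarrow> E a (hd p)) \<and> is_path V E p"
proof
  assume h: "is_path V E (a # p)"
  have "\<forall>i. Suc i < length p \<longrightarrow> E (p ! i) (p ! Suc i)"
  proof (intro allI impI)
    fix i assume "Suc i < length p"
    then have "Suc (Suc i) < length (a # p)" by simp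
    then show "E (p ! i) (p ! Suc i)" using h unfolding is_path_def by fastforce
  qed
  moreover have "p \<noteq> [] \<longrightarrow> E a (hd p)"
  proof
    assume "p \<noteq> []"
    then have "Suc 0 < length (a # p)" by simp
    then have "E ((a#p) ! 0) ((a#p) ! Suc 0)" using h unfolding is_path_def by blast
    then show "E a (hd p)" using \<open>p \<noteq> []\<close> by (cases p) auto
  qed
  ultimately show "a \<in> V \<and> a \<notin> set p \<and> (p \<noteq> [] \<longrightarrow> E a (hd p)) \<and> is_path V E p"
    using h unfolding is_path_def by auto
next
  assume h: "a \<in> V \<and> a \<notin> set p \<and> (p \<noteq> [] \<longrightarrow> E a (hd p)) \<and> is_path V E p"
  have "\<forall>i. Suc i < length (a#p) \<longrightarrow> E ((a#p) ! i) ((a#p) ! Suc i)"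
  proof (intro allI impI)
    fix i assume i: "Suc i < length (a#p)"
    show "E ((a#p) ! i) ((a#p) ! Suc i)"
    proof (cases i)
      case 0
      then show ?thesis using h i by (cases p) auto
    next
      case (Suc j)
      then show ?thesis using h i unfolding is_path_def by auto
    qed
  qed
  then show "is_path V E (a # p)" using h unfolding is_path_def by auto
qed

lemma build:
  assumes bg: "bipartite_graph X Y E"
    and deg: "\<forall>y\<in>Y. 2 * degree (X \<union> Y) E y \<ge> card X + card Y"
  shows "ys \<noteq> [] \<Longrightarrow> distinct ys \<Longrightarrow> set ys \<subseteq> Y \<Longrightarrow>
     \<exists>p. is_path (X \<union> Y) E p \<and> length p = 2 * length ys \<and> set p \<inter> Y = set ys
       \<and> card (set p \<inter> X) = length ys \<and> hd p = hd ys"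
proof (induction ys)
  case Nil
  then show ?case by simp
next
  case (Cons y ys)
  have fX: "finite X" and fY: "finite Y" and disj: "X \<inter> Y = {}"
    and sym: "\<And>u v. E u v \<longleftrightarrow> E v u"
    and bip: "\<And>u v. E u v \<Longrightarrow> (u \<in> X \<and> v \<in> Y) \<or> (u \<in> Y \<and> v \<in> X)"
    using bg unfolding bipartite_graph_def by auto
  define N where "N = (\<lambda>v. {u \<in> X \<union> Y. E v u})"
  have NX: "v \<in> Y \<Longrightarrow> N v \<subseteq> X" for v using bip disj unfolding N_def by blast
  have Nfin: "finite (N v)" for v using fX fY unfolding N_def by auto
  have Ndeg: "v \<in> Y \<Longrightarrow> 2 * card (N v) \<ge> card X + card Y" for v
    using deg unfolding N_def degree_def by auto
  have yY: "y \<in> Y" using Cons by simp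
  have cYpos: "card Y \<ge> length (y # ys)"
    using Cons.prems card_mono[OF fY, of "set (y#ys)"] distinct_card[of "y#ys"] by simp
  have cardX: "card (N y) \<le> card X" using NX[OF yY] card_mono[OF fX] by blast
  show ?case
  proof (cases ys)
    case Nil
    have "card (N y) > 0" using Ndeg[OF yY] cYpos by simp
    then obtain x where x: "x \<in> N y" by (metis card_gt_0_iff ex_in_conv)
    have xX: "x \<in> X" using x NX[OF yY] by blast
    have "x \<noteq> y" using xX yY disj by blast
    then have "is_path (X \<union> Y) E [y, x]" using x yY unfolding N_def
      by (simp add: is_path_Cons is_path_def)
    moreover have "set [y,x] \<inter> Y = {y}" using xX yY disj by auto
    moreover have "set [y,x] \<inter> X = {x}" using xX yY disj by auto
    ultimately show ?thesis using Nil by (intro exI[of _ "[y,x]"]) auto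
  next
    case (Cons y' ys'')
    then have "ys \<noteq> []" by simp
    with Cons.IH Cons.prems obtain p where
      p: "is_path (X \<union> Y) E p" "length p = 2 * length ys" "set p \<inter> Y = set ys"
      "card (set p \<inter> X) = length ys" "hd p = hd ys" by auto
    have y'Y: "y' \<in> Y" using Cons Cons.prems by simp
    have cardX': "card (N y') \<le> card X" using NX[OF y'Y] card_mono[OF fX] by blast
    have un: "card (N y \<union> N y') \<le> card X"
      using NX[OF yY] NX[OF y'Y] card_mono[OF fX, of "N y \<union> N y'"] by blast
    have "card (N y) + card (N y') = card (N y \<union> N y') + card (N y \<inter> N y')"
      using card_Un_Int[OF Nfin Nfin] .
    then have I: "card (N y \<inter> N y') \<ge> card Y" using Ndeg[OF yY] Ndeg[OF y'Y] un by linarith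
    have "card (set p \<inter> X) < card Y" using p(4) cYpos by simp
    then have "card (N y \<inter> N y') > card (set p \<inter> X)" using I by linarith
    then have "\<not> (N y \<inter> N y' \<subseteq> set p \<inter> X)"
      using card_mono[of "set p \<inter> X" "N y \<inter> N y'"] by auto
    then obtain x where x: "x \<in> N y" "x \<in> N y'" "x \<notin> set p"
      using NX[OF yY] by blast
    have xX: "x \<in> X" using x NX[OF yY] by blast
    have pne: "p \<noteq> []" using p(2) Cons by auto
    have hp: "hd p = y'" using p(5) Cons by simp
    have yp: "y \<notin> set p" using p(3) yY Cons.prems by auto
    have "x \<noteq> y" using xX yY disj by blast
    have path: "is_path (X \<union> Y) E (y # x # p)"
      using p(1) x yY xX yp pne hp \<open>x \<noteq> y\<close> sym unfolding N_def
      by (auto simp: is_path_Cons)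
    have s1: "set (y # x # p) \<inter> Y = set (y # ys)" using p(3) yY xX disj by auto
    have s2: "set (y # x # p) \<inter> X = insert x (set p \<inter> X)" using yY xX disj by auto
    have "card (set (y # x # p) \<inter> X) = Suc (length ys)"
      using s2 x(3) p(4) by simp
    then show ?thesis using path s1 p(2) by (intro exI[of _ "y # x # p"]) auto
  qed
qed

theorem lemma2p2:
  fixes X Y :: "'a set" and E :: "'a \<Rightarrow> 'a \<Rightarrow> bool"
  assumes "bipartite_graph X Y E"
    and "\<forall>y\<in>Y. 2 * degree (X \<union> Y) E y \<ge> card X + card Y"
  shows "\<exists>p. is_path (X \<union> Y) E p \<and> length p = 2 * card Y"
proof -
  have fY: "finite Y" using assms(1) unfolding bipartite_graph_def by auto
  obtain ys where ys: "set ys = Y" "distinct ys" using finite_distinct_list[OF fY] by blast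
  have len: "length ys = card Y" using ys distinct_card by metis
  show ?thesis
  proof (cases "ys = []")
    case True
    then show ?thesis using len by (intro exI[of _ "[]"]) (simp add: is_path_def)
  next
    case False
    then show ?thesis using build[OF assms, of ys] ys len by auto
  qed
qed

end
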